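(* For $1\mid t_j=1\mid\sum C_j$ with obligatory tests, the algorithm that first executes the tests of all $n$ jobs (in any order) and afterwards executes the processing parts of all jobs in non-decreasing order of $p_j$ is $2$-competitive.
   Context: Scheduling with obligatory tests and uniform test times: $n$ jobs on a single machine, each with test time $t_j=1$ and an unknown processing time $p_j\ge0$ revealed only when the test of $j$ completes. The test of a job must be executed before its processing part (which can be executed any time afterwards); operations are non-preemptive, one at a time. $C_j$ is the completion time of the processing part of $j$; objective $\sum_jC_j$. An algorithm is $\rho$-competitive if $\mathit{ALG}\le\rho\cdot\mathit{OPT}$ on every instance, where $\mathit{OPT}$ is the offline optimum (tests also obligatory). *)

theory Defs
  imports Complex_Main
begin

text \<open>Jobs are 0..n-1; every test takes time 1, the processing part of job j takes p j >= 0.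
A schedule gives start times ts j (test of j) and sp j (processing part of j).\<close>

definition no_overlap :: "real \<Rightarrow> real \<Rightarrow> real \<Rightarrow> real \<Rightarrow> bool" where
  "no_overlap a l b m \<longleftrightarrow> a + l \<le> b \<or> b + m \<le> a"

definition feasible :: "nat \<Rightarrow> (nat \<Rightarrow> real) \<Rightarrow> (nat \<Rightarrow> real) \<Rightarrow> (nat \<Rightarrow> real) \<Rightarrow> bool" where
  "feasible n p ts sp \<longleftrightarrow>
     (\<forall>j<n. 0 \<le> ts j \<and> ts j + 1 \<le> sp j) \<and>
     (\<forall>i<n. \<forall>j<n. i \<noteq> j \<longrightarrow>
        no_overlap (ts i) 1 (ts j) 1 \<and> no_overlap (sp i) (p i) (sp j) (p j)) \<and>
     (\<forall>i<n. \<forall>j<n. no_overlap (ts i) 1 (sp j) (p j))"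

definition cost :: "nat \<Rightarrow> (nat \<Rightarrow> real) \<Rightarrow> (nat \<Rightarrow> real) \<Rightarrow> real" where
  "cost n p sp = (\<Sum>j<n. sp j + p j)"

definition opt :: "nat \<Rightarrow> (nat \<Rightarrow> real) \<Rightarrow> real" where
  "opt n p = Inf {cost n p sp | ts sp. feasible n p ts sp}"

end

theory Submission
  imports Defs
begin

lemma intervals_pos:
  fixes a l :: "'a \<Rightarrow> real"
  assumes "finite S" "\<forall>k\<in>S. 0 < l k" "\<forall>k\<in>S. 0 \<le> a k"
    "\<forall>i\<in>S. \<forall>j\<in>S. i \<noteq> j \<longrightarrow> no_overlap (a i) (l i) (a j) (l j)"
    "\<forall>k\<in>S. a k + l k \<le> C" "0 \<le> C"
  shows "(\<Sum>k\<in>S. l k) \<le> C"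
  using assms
proof (induction "card S" arbitrary: S C rule: less_induct)
  case less
  show ?case
  proof (cases "S = {}")
    case True then show ?thesis using less.prems by simp
  next
    case False
    define e where "e = Max ((\<lambda>k. a k + l k) ` S)"
    have "e \<in> (\<lambda>k. a k + l k) ` S" unfolding e_def using False less.prems(1) by (intro Max_in) auto
    then obtain k where k: "k \<in> S" "e = a k + l k" by auto
    have mx: "\<forall>x\<in>S. a x + l x \<le> a k + l k"
    proof
      fix x assume "x \<in> S"
      then have "a x + l x \<le> e" unfolding e_def using less.prems(1) by (intro Max_ge) auto
      then show "a x + l x \<le> a k + l k" using k by simp
    qed
    have "(\<Sum>x\<in>S - {k}. l x) \<le> a k"
    proof (rule less.hyps)
      show "card (S - {k}) < card S" using k less.prems(1) by (meson card_Diff1_less)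
      show "\<forall>x\<in>S - {k}. a x + l x \<le> a k"
      proof
        fix x assume x: "x \<in> S - {k}"
        then have "no_overlap (a x) (l x) (a k) (l k)" using less.prems(4) k by auto
        moreover have "a x + l x \<le> a k + l k" "0 < l x" using mx less.prems(2) x by auto
        ultimately show "a x + l x \<le> a k" unfolding no_overlap_def by linarith
      qed
    qed (use less.prems k in auto)
    then have "(\<Sum>x\<in>S. l x) \<le> l k + a k"
      using k less.prems(1) by (simp add: sum.remove)
    then show ?thesis using less.prems(5) k by auto
  qed
qed

lemma intervals:
  fixes a l :: "'a \<Rightarrow> real"
  assumes "finite S" "\<forall>k\<in>S. 0 \<le> l k" "\<forall>k\<in>S. 0 \<le> a k"
    "\<forall>i\<in>S. \<forall>j\<in>S. i \<noteq> j \<longrightarrow> no_overlap (a i) (l i) (a j) (l j)"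
    "\<forall>k\<in>S. a k + l k \<le> C" "0 \<le> C"
  shows "(\<Sum>k\<in>S. l k) \<le> C"
proof -
  have "(\<Sum>k\<in>S. l k) = (\<Sum>k\<in>S \<inter> {k. 0 < l k}. l k)"
    using assms(1,2) by (intro sum.mono_neutral_right) force+
  also have "\<dots> \<le> C" using assms by (intro intervals_pos[of "S \<inter> {k. 0 < l k}" l a C]) auto
  finally show ?thesis .
qed

lemma lower_bound:
  assumes pn: "\<forall>j<n. 0 \<le> p j" and F: "feasible n p ts sp"
  shows "real (n*n) + (\<Sum>b<n. \<Sum>a<n. min (p a) (p b)) \<le> 2 * cost n p sp"
proof -
  define C where "C j = sp j + p j" for j
  define f where "f i = 1 + p i" for i
  have F1: "\<forall>j<n. 0 \<le> ts j \<and> ts j + 1 \<le> sp j" and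
    F2: "\<forall>i<n. \<forall>j<n. i \<noteq> j \<longrightarrow> no_overlap (ts i) 1 (ts j) 1 \<and> no_overlap (sp i) (p i) (sp j) (p j)" and
    F3: "\<forall>i<n. \<forall>j<n. no_overlap (ts i) 1 (sp j) (p j)"
    using F unfolding feasible_def by auto
  define st where "st = (\<lambda>(i::nat, b::bool). if b then sp i else ts i)"
  define ln where "ln = (\<lambda>(i::nat, b::bool). if b then p i else 1)"
  have sym: "no_overlap x l y m = no_overlap y m x l" for x l y m unfolding no_overlap_def by auto
  have per: "(\<Sum>i<n. if C i \<le> C j then f i else 0) \<le> C j" if j: "j < n" for j
  proof -
    define A where "A = {i. i < n \<and> C i \<le> C j}"
    have "(\<Sum>i<n. if C i \<le> C j then f i else 0) = (\<Sum>i\<in>A. f i)"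
      unfolding A_def by (rule sum.mono_neutral_cong_right) auto
    also have "\<dots> = (\<Sum>k\<in>A \<times> UNIV. ln k)"
      by (simp add: sum.cartesian_product[symmetric] UNIV_bool f_def ln_def add.commute)
    also have "\<dots> \<le> C j"
    proof (rule intervals[where a = st])
      show "finite (A \<times> (UNIV::bool set))" unfolding A_def by auto
      show "\<forall>k\<in>A \<times> UNIV. 0 \<le> ln k" using pn unfolding A_def ln_def by auto
      show "\<forall>k\<in>A \<times> UNIV. 0 \<le> st k" using F1 unfolding A_def st_def by force
      show "\<forall>k\<in>A \<times> UNIV. st k + ln k \<le> C j"
        using F1 pn unfolding A_def st_def ln_def C_def by force
      show "0 \<le> C j" using F1 pn j unfolding C_def by force
      show "\<forall>x\<in>A \<times> UNIV. \<forall>y\<in>A \<times> UNIV. x \<noteq> y \<longrightarrow> no_overlap (st x) (ln x) (st y) (ln y)"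
      proof (intro ballI impI)
        fix x y assume x: "x \<in> A \<times> (UNIV::bool set)" and y: "y \<in> A \<times> (UNIV::bool set)" and ne: "x \<noteq> y"
        obtain i b where xi: "x = (i, b)" by force
        obtain i' b' where yi: "y = (i', b')" by force
        have "i < n" "i' < n" using x y xi yi unfolding A_def by auto
        then show "no_overlap (st x) (ln x) (st y) (ln y)"
        proof (cases b; cases b')
          assume "b" "\<not> b'"
          then show ?thesis using F3 \<open>i < n\<close> \<open>i' < n\<close> xi yi sym[of "ts i'" 1] unfolding st_def ln_def by auto
        qed (use F2 F3 ne xi yi in \<open>auto simp: st_def ln_def\<close>)
      qed
    qed
    finally show ?thesis .
  qed
  define T where "T = (\<Sum>j<n. \<Sum>i<n. if C i \<le> C j then f i else 0)"
  have "T \<le> (\<Sum>j<n. C j)" unfolding T_def by (rule sum_mono) (use per in auto)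
  also have "\<dots> = cost n p sp" unfolding cost_def C_def by simp
  finally have Tc: "T \<le> cost n p sp" .
  have "T + T = (\<Sum>j<n. \<Sum>i<n. (if C i \<le> C j then f i else 0) + (if C j \<le> C i then f j else 0))"
    unfolding T_def by (subst sum.swap[of _ _ "{..<n}"]) (simp add: sum.distrib)
  also have "\<dots> \<ge> (\<Sum>j<n. \<Sum>i<n. 1 + min (p i) (p j))"
    using pn unfolding f_def by (intro sum_mono) (auto simp: min_def)
  finally have "(\<Sum>j<n. \<Sum>i<n. 1 + min (p i) (p j)) \<le> T + T" .
  moreover have "(\<Sum>j<n. \<Sum>i<n. 1 + min (p i) (p j)) = real (n*n) + (\<Sum>b<n. \<Sum>a<n. min (p a) (p b))"
    by (simp add: sum.distrib)
  ultimately show ?thesis using Tc by linarith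
qed

theorem mainTheorem15:
  fixes n :: nat and p ts sp :: "nat \<Rightarrow> real" and \<tau> \<sigma> :: "nat \<Rightarrow> nat"
  assumes p_nonneg: "\<forall>j<n. 0 \<le> p j"
    and tau_perm: "bij_betw \<tau> {..<n} {..<n}"
    and sigma_perm: "bij_betw \<sigma> {..<n} {..<n}"
    and sigma_sorted: "\<forall>a b. a \<le> b \<and> b < n \<longrightarrow> p (\<sigma> a) \<le> p (\<sigma> b)"
    and tests_first: "\<forall>k<n. ts (\<tau> k) = real k"
    and proc_sorted: "\<forall>k<n. sp (\<sigma> k) = real n + (\<Sum>i<k. p (\<sigma> i))"
  shows "feasible n p ts sp \<and> cost n p sp \<le> 2 * opt n p"
proof -
  have sig_lt: "\<And>k. k < n \<Longrightarrow> \<sigma> k < n" using sigma_perm by (auto dest: bij_betw_apply)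
  have pos: "\<And>i. i < n \<Longrightarrow> 0 \<le> p (\<sigma> i)" using p_nonneg sig_lt by auto
  have pre: "sp (\<sigma> a) + p (\<sigma> a) \<le> sp (\<sigma> b)" if "a < b" "b < n" for a b
  proof -
    have "(\<Sum>i<Suc a. p (\<sigma> i)) \<le> (\<Sum>i<b. p (\<sigma> i))"
      using that pos by (intro sum_mono2) auto
    then show ?thesis using proc_sorted that by simp
  qed
  have spge: "real n \<le> sp (\<sigma> k)" if "k < n" for k
  proof -
    have "0 \<le> (\<Sum>i<k. p (\<sigma> i))" using pos that by (intro sum_nonneg) auto
    then show ?thesis using proc_sorted that by simp
  qed
  have sj: "\<exists>k<n. j = \<sigma> k" if "j < n" for j
  proof -
    have "j \<in> \<sigma> ` {..<n}" using sigma_perm that unfolding bij_betw_def by auto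
    then show ?thesis by auto
  qed
  have tj: "\<exists>k<n. j = \<tau> k" if "j < n" for j
  proof -
    have "j \<in> \<tau> ` {..<n}" using tau_perm that unfolding bij_betw_def by auto
    then show ?thesis by auto
  qed
  have spn: "real n \<le> sp j" if "j < n" for j using sj[OF that] spge by auto
  have tsr: "0 \<le> ts j \<and> ts j + 1 \<le> real n" if "j < n" for j
    using tj[OF that] tests_first by auto
  have feas: "feasible n p ts sp"
    unfolding feasible_def
  proof (intro conjI allI impI)
    fix j assume "j < n" then show "0 \<le> ts j" "ts j + 1 \<le> sp j" using tsr[of j] spn[of j] by auto
  next
    fix i j assume "i < n" "j < n" then show "no_overlap (ts i) 1 (sp j) (p j)"
      using tsr[of i] spn[of j] unfolding no_overlap_def by auto
  next
    fix i j assume ij: "i < n" "j < n" "i \<noteq> j"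
    obtain a where a: "a < n" "i = \<tau> a" using tj[OF ij(1)] by blast
    obtain b where b: "b < n" "j = \<tau> b" using tj[OF ij(2)] by blast
    note ab = a(1) b(1) a(2) b(2)
    have "a \<noteq> b" using ab(3,4) ij(3) by blast
    then have "a + 1 \<le> b \<or> b + 1 \<le> a" by arith
    then have "real a + 1 \<le> real b \<or> real b + 1 \<le> real a" by (metis of_nat_1 of_nat_add of_nat_le_iff)
    moreover have "ts i = real a" "ts j = real b" using ab tests_first by auto
    ultimately show "no_overlap (ts i) 1 (ts j) 1" unfolding no_overlap_def by auto
    obtain a where a: "a < n" "i = \<sigma> a" using sj[OF ij(1)] by blast
    obtain b where b: "b < n" "j = \<sigma> b" using sj[OF ij(2)] by blast
    note ab = a(1) b(1) a(2) b(2)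
    have "a \<noteq> b" using ab(3,4) ij(3) by blast
    then have "a < b \<or> b < a" by arith
    then show "no_overlap (sp i) (p i) (sp j) (p j)"
    proof
      assume "a < b" then show ?thesis using ab pre[of a b] unfolding no_overlap_def by simp
    next
      assume "b < a" then show ?thesis using ab pre[of b a] unfolding no_overlap_def by simp
    qed
  qed
  define M where "M = (\<Sum>b<n. \<Sum>a<n. min (p a) (p b))"
  have "cost n p sp = (\<Sum>k<n. sp (\<sigma> k) + p (\<sigma> k))"
    unfolding cost_def using sum.reindex_bij_betw[OF sigma_perm, of "\<lambda>j. sp j + p j"] by simp
  also have "\<dots> = (\<Sum>k<n. real n + (\<Sum>i<Suc k. p (\<sigma> i)))"
    using proc_sorted by (intro sum.cong) auto
  also have "\<dots> \<le> (\<Sum>k<n. real n + (\<Sum>i<n. min (p (\<sigma> i)) (p (\<sigma> k))))"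
  proof (intro sum_mono add_left_mono)
    fix k assume k: "k \<in> {..<n}"
    have "(\<Sum>i<Suc k. p (\<sigma> i)) = (\<Sum>i<Suc k. min (p (\<sigma> i)) (p (\<sigma> k)))"
    proof (rule sum.cong[OF refl])
      fix i assume "i \<in> {..<Suc k}"
      then have "p (\<sigma> i) \<le> p (\<sigma> k)" using sigma_sorted k by simp
      then show "p (\<sigma> i) = min (p (\<sigma> i)) (p (\<sigma> k))" by simp
    qed
    also have "\<dots> \<le> (\<Sum>i<n. min (p (\<sigma> i)) (p (\<sigma> k)))"
      using k pos by (intro sum_mono2) auto
    finally show "(\<Sum>i<Suc k. p (\<sigma> i)) \<le> (\<Sum>i<n. min (p (\<sigma> i)) (p (\<sigma> k)))" .
  qed
  also have "\<dots> = real (n*n) + (\<Sum>k<n. \<Sum>i<n. min (p (\<sigma> i)) (p (\<sigma> k)))"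
    by (simp add: sum.distrib)
  also have "(\<Sum>k<n. \<Sum>i<n. min (p (\<sigma> i)) (p (\<sigma> k))) = M"
  proof -
    have "(\<Sum>k<n. \<Sum>i<n. min (p (\<sigma> i)) (p (\<sigma> k))) = (\<Sum>k<n. \<Sum>a<n. min (p a) (p (\<sigma> k)))"
    proof (rule sum.cong[OF refl])
      fix k show "(\<Sum>i<n. min (p (\<sigma> i)) (p (\<sigma> k))) = (\<Sum>a<n. min (p a) (p (\<sigma> k)))"
        using sum.reindex_bij_betw[OF sigma_perm, of "\<lambda>a. min (p a) (p (\<sigma> k))"] by simp
    qed
    also have "\<dots> = M" unfolding M_def
      using sum.reindex_bij_betw[OF sigma_perm, of "\<lambda>b. \<Sum>a<n. min (p a) (p b)"] by simp
    finally show ?thesis .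
  qed
  finally have alg: "cost n p sp \<le> real (n*n) + M" .
  have "real (n*n) + M \<le> 2 * opt n p"
  proof -
    have "(real (n*n) + M) / 2 \<le> Inf {cost n p sp | ts sp. feasible n p ts sp}"
    proof (rule cInf_greatest)
      show "{cost n p sp |ts sp. feasible n p ts sp} \<noteq> {}" using feas by blast
      fix x assume "x \<in> {cost n p sp |ts sp. feasible n p ts sp}"
      then obtain ts' sp' where "x = cost n p sp'" "feasible n p ts' sp'" by blast
      then show "(real (n*n) + M) / 2 \<le> x"
        using lower_bound[OF p_nonneg, of ts' sp'] unfolding M_def by simp
    qed
    then show ?thesis unfolding opt_def by simp
  qed
  with alg feas show ?thesis by simp
qed

end
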